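(* Let $Q$ be a polyhedral partially ordered abelian group and $D\subseteq Q$ a downset. Then $D=\bigcup_{\tau}\Gamma_\tau(D_\tau)$, the union over all faces $\tau$ of the positive cone $Q_+$.
   Context: A partially ordered abelian group is an abelian group $Q$ generated by a submonoid $Q_+$ (positive cone) whose only unit is $0$; $q\preceq q'$ iff $q'-q\in Q_+$. A face is a submonoid $\sigma\subseteq Q_+$ such that $Q_+\setminus\sigma$ is an ideal of the monoid $Q_+$; $Q$ is polyhedral if there are finitely many faces. A downset is a subset $D\subseteq Q$ with $D-Q_+=D$. For a face $\tau$ and downset $D$: the localization of $D$ along $\tau$ is $D_\tau=\{q\in D: q+\tau\subseteq D\}$ (again a downset). An element $q\in D$ is globally supported on $\tau$ (in $D$) if $q\notin D_{\tau'}$ for every face $\tau'\not\subseteq\tau$; $\Gamma_\tau D$ is the set of such elements. Thus $\Gamma_\tau(D_\tau)$ is the set of $q\in D_\tau$ with $q\notin(D_\tau)_{\tau'}$ for every face $\tau'\not\subseteq\tau$ (the local $\tau$-support of $D$). *)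

theory Defs
  imports Main
begin

definition submonoid :: "'a::ab_group_add set \<Rightarrow> bool" where
  "submonoid M \<longleftrightarrow> 0 \<in> M \<and> (\<forall>x\<in>M. \<forall>y\<in>M. x + y \<in> M)"

definition pos_cone :: "'a::ab_group_add set \<Rightarrow> bool" where
  "pos_cone P \<longleftrightarrow> submonoid P
     \<and> (\<forall>x\<in>P. -x \<in> P \<longrightarrow> x = 0)
     \<and> (\<forall>q. \<exists>a\<in>P. \<exists>b\<in>P. q = a - b)"

definition is_face :: "'a::ab_group_add set \<Rightarrow> 'a set \<Rightarrow> bool" where
  "is_face P \<sigma> \<longleftrightarrow> submonoid \<sigma> \<and> \<sigma> \<subseteq> P
     \<and> (\<forall>x\<in>P - \<sigma>. \<forall>p\<in>P. x + p \<in> P - \<sigma>)"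

definition polyhedral :: "'a::ab_group_add set \<Rightarrow> bool" where
  "polyhedral P \<longleftrightarrow> finite {\<sigma>. is_face P \<sigma>}"

definition downset :: "'a::ab_group_add set \<Rightarrow> 'a set \<Rightarrow> bool" where
  "downset P D \<longleftrightarrow> {d - p | d p. d \<in> D \<and> p \<in> P} = D"

definition localize :: "'a::ab_group_add set \<Rightarrow> 'a set \<Rightarrow> 'a set" where
  "localize D \<tau> = {q \<in> D. \<forall>t\<in>\<tau>. q + t \<in> D}"

definition glob_supp :: "'a::ab_group_add set \<Rightarrow> 'a set \<Rightarrow> 'a set \<Rightarrow> 'a set" where
  "glob_supp P \<tau> D = {q \<in> D. \<forall>\<tau>'. is_face P \<tau>' \<and> \<not> \<tau>' \<subseteq> \<tau> \<longrightarrow> q \<notin> localize D \<tau>'}"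

end

theory Submission
  imports Defs
begin

lemma down_mem:
  assumes "downset P D" "d \<in> D" "p \<in> P"
  shows "d - p \<in> D"
  using assms unfolding downset_def by blast

lemma zero_face:
  assumes "pos_cone P"
  shows "is_face P {0}"
proof -
  have sm: "submonoid P" and pt: "\<forall>x\<in>P. -x \<in> P \<longrightarrow> x = 0" using assms unfolding pos_cone_def by auto
  have "0 \<in> P" using sm unfolding submonoid_def by auto
  moreover have "\<forall>x\<in>P - {0}. \<forall>p\<in>P. x + p \<in> P - {0}"
  proof (intro ballI)
    fix x p assume x: "x \<in> P - {0}" and p: "p \<in> P"
    have "x + p \<in> P" using sm x p unfolding submonoid_def by auto
    moreover have "x + p \<noteq> 0"
    proof
      assume "x + p = 0"
      then have "-x = p" by (simp add: add_eq_0_iff)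
      then show False using pt x p by auto
    qed
    ultimately show "x + p \<in> P - {0}" by simp
  qed
  ultimately show ?thesis unfolding is_face_def submonoid_def by auto
qed

lemma gen_face:
  assumes "pos_cone P" "is_face P \<tau>" "is_face P \<tau>'"
  defines "F \<equiv> {p \<in> P. \<exists>x\<in>P. \<exists>a\<in>\<tau>. \<exists>b\<in>\<tau>'. p + x = a + b}"
  shows "is_face P F" "\<tau> \<subseteq> F" "\<tau>' \<subseteq> F"
proof -
  have sm: "submonoid P" using assms unfolding pos_cone_def by auto
  have t: "submonoid \<tau>" "\<tau> \<subseteq> P" and t': "submonoid \<tau>'" "\<tau>' \<subseteq> P"
    using assms unfolding is_face_def by auto
  have P0: "0 \<in> P" and Padd: "\<And>x y. x \<in> P \<Longrightarrow> y \<in> P \<Longrightarrow> x + y \<in> P" using sm unfolding submonoid_def by auto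
  have t0: "0 \<in> \<tau>" "0 \<in> \<tau>'" using t t' unfolding submonoid_def by auto
  have tadd: "\<And>x y. x \<in> \<tau> \<Longrightarrow> y \<in> \<tau> \<Longrightarrow> x + y \<in> \<tau>" "\<And>x y. x \<in> \<tau>' \<Longrightarrow> y \<in> \<tau>' \<Longrightarrow> x + y \<in> \<tau>'"
    using t t' unfolding submonoid_def by auto
  show "\<tau> \<subseteq> F"
  proof
    fix a assume "a \<in> \<tau>"
    moreover have "a + 0 = a + 0" by simp
    ultimately show "a \<in> F" unfolding F_def using t(2) P0 t0 by blast
  qed
  show "\<tau>' \<subseteq> F"
  proof
    fix b assume "b \<in> \<tau>'"
    moreover have "b + 0 = 0 + b" by simp
    ultimately show "b \<in> F" unfolding F_def using t'(2) P0 t0 by blast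
  qed
  have "submonoid F"
    unfolding submonoid_def
  proof (intro conjI ballI)
    show "0 \<in> F" using \<open>\<tau> \<subseteq> F\<close> t0 by auto
    fix p p' assume "p \<in> F" "p' \<in> F"
    then obtain x a b x' a' b' where h: "p \<in> P" "x \<in> P" "a \<in> \<tau>" "b \<in> \<tau>'" "p + x = a + b"
      "p' \<in> P" "x' \<in> P" "a' \<in> \<tau>" "b' \<in> \<tau>'" "p' + x' = a' + b'" unfolding F_def by blast
    have "(p + p') + (x + x') = (a + a') + (b + b')" using h(5) h(10)
      by (metis add.assoc add.commute)
    then show "p + p' \<in> F" unfolding F_def using h Padd tadd by blast
  qed
  moreover have "F \<subseteq> P" unfolding F_def by auto
  moreover have "\<forall>x\<in>P - F. \<forall>p\<in>P. x + p \<in> P - F"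
  proof (intro ballI)
    fix y p assume y: "y \<in> P - F" and p: "p \<in> P"
    have "y + p \<notin> F"
    proof
      assume "y + p \<in> F"
      then obtain x a b where "x \<in> P" "a \<in> \<tau>" "b \<in> \<tau>'" "y + p + x = a + b" unfolding F_def by blast
      then have "y + (p + x) = a + b" "p + x \<in> P" using p Padd by (auto simp: add.assoc)
      then have "y \<in> F" unfolding F_def using y \<open>a \<in> \<tau>\<close> \<open>b \<in> \<tau>'\<close> by blast
      then show False using y by blast
    qed
    then show "y + p \<in> P - F" using y p Padd by blast
  qed
  ultimately show "is_face P F" unfolding is_face_def by blast
qed

theorem theorem3p10:
  fixes P D :: "'a::ab_group_add set"
  assumes "pos_cone P" and "polyhedral P" and "downset P D"
  shows "D = (\<Union>\<tau>\<in>{\<tau>. is_face P \<tau>}. glob_supp P \<tau> (localize D \<tau>))"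
proof
  show "(\<Union>\<tau>\<in>{\<tau>. is_face P \<tau>}. glob_supp P \<tau> (localize D \<tau>)) \<subseteq> D"
    unfolding glob_supp_def localize_def by auto
  show "D \<subseteq> (\<Union>\<tau>\<in>{\<tau>. is_face P \<tau>}. glob_supp P \<tau> (localize D \<tau>))"
  proof
    fix q assume q: "q \<in> D"
    let ?S = "{\<tau>. is_face P \<tau> \<and> q \<in> localize D \<tau>}"
    have fin: "finite ?S" using assms(2) unfolding polyhedral_def by (rule finite_subset[rotated]) auto
    have "{0} \<in> ?S" using zero_face[OF assms(1)] q unfolding localize_def by auto
    then have "?S \<noteq> {}" by blast
    from finite_has_maximal[OF fin this] obtain \<tau> where
      tS: "\<tau> \<in> ?S" and mx: "\<And>b. b \<in> ?S \<Longrightarrow> \<tau> \<subseteq> b \<Longrightarrow> \<tau> = b" by blast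
    have "q \<in> glob_supp P \<tau> (localize D \<tau>)"
      unfolding glob_supp_def
    proof (intro CollectI conjI allI impI)
      show "q \<in> localize D \<tau>" using tS by simp
      fix \<tau>' assume h: "is_face P \<tau>' \<and> \<not> \<tau>' \<subseteq> \<tau>"
      show "q \<notin> localize (localize D \<tau>) \<tau>'"
      proof
        assume ql: "q \<in> localize (localize D \<tau>) \<tau>'"
        define F where "F = {p \<in> P. \<exists>x\<in>P. \<exists>a\<in>\<tau>. \<exists>b\<in>\<tau>'. p + x = a + b}"
        have tf: "is_face P \<tau>" using tS by simp
        have h1: "is_face P \<tau>'" using h by simp
        note gf = gen_face[OF assms(1) tf h1, folded F_def]
        have "q \<in> localize D F" unfolding localize_def
        proof (intro CollectI conjI ballI)
          show "q \<in> D" by fact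
          fix f assume "f \<in> F"
          then obtain x a b where fx: "x \<in> P" "a \<in> \<tau>" "b \<in> \<tau>'" "f + x = a + b" unfolding F_def by blast
          have "q + b \<in> localize D \<tau>" using ql fx(3) unfolding localize_def by blast
          then have "q + b + a \<in> D" using fx(2) unfolding localize_def by blast
          then have "q + b + a - x \<in> D" using down_mem[OF assms(3) _ fx(1)] by blast
          moreover have "q + b + a - x = q + f" using fx(4) by (simp add: algebra_simps eq_diff_eq)
          ultimately show "q + f \<in> D" by simp
        qed
        then have "F \<in> ?S" using gf h by blast
        then have "\<tau> = F" using mx gf(2) by simp
        then show False using gf h by blast
      qed
    qed
    then show "q \<in> (\<Union>\<tau>\<in>{\<tau>. is_face P \<tau>}. glob_supp P \<tau> (localize D \<tau>))" using tS by blast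
  qed
qed

end
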